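(* Let $n\ge3$ and $\tau\in\mathbb{C}^\times$. With $\Delta$ as in the context, $$\prod_{\mu=2}^{n-2}(x_\mu-z_1\tau)\,\Delta(z_1\tau^{-1},x_2,\dots,x_{n-2}\,|\,z_1\tau^{-n},z_2,\dots,z_n)=\prod_{\mu=2}^{n-2}(x_\mu-z_1\tau^{-1})\,\Delta(z_1\tau,x_2,\dots,x_{n-2}\,|\,z_1\tau^{n},z_2,\dots,z_n).$$
   Context: For $\lambda\ge1$, $A_\lambda(x|z_1,\dots,z_n)=\sum_{\kappa=0}^{\lambda}(-1)^\kappa x^{\lambda-\kappa}\big(\tau^{n(\lambda-\kappa)+\kappa}-\tau^{-n(\lambda-\kappa)-\kappa}\big)\sigma_\kappa(z_1,\dots,z_n)$, where $\sigma_\kappa$ is the $\kappa$-th elementary symmetric polynomial ($\sigma_\kappa=0$ for $\kappa>n$), and $\Delta(x_1,\dots,x_{n-2}|z_1,\dots,z_n)=\det\big(A_\lambda(x_\mu|z_1,\dots,z_n)\big)_{1\le\lambda,\mu\le n-2}$. *)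

theory Defs
  imports Complex_Main "Jordan_Normal_Form.Determinant"
begin

definition esym :: "nat \<Rightarrow> nat \<Rightarrow> (nat \<Rightarrow> complex) \<Rightarrow> complex" where
  "esym n k z = (\<Sum>S\<in>{S. S \<subseteq> {1..n} \<and> card S = k}. \<Prod>i\<in>S. z i)"

definition Apoly :: "complex \<Rightarrow> nat \<Rightarrow> nat \<Rightarrow> complex \<Rightarrow> (nat \<Rightarrow> complex) \<Rightarrow> complex" where
  "Apoly \<tau> n lam x z = (\<Sum>\<kappa>=0..lam. (-1) ^ \<kappa> * x ^ (lam - \<kappa>) *
      (\<tau> powi (int n * int (lam - \<kappa>) + int \<kappa>) - \<tau> powi (- (int n * int (lam - \<kappa>)) - int \<kappa>))
      * esym n \<kappa> z)"

definition Delta :: "complex \<Rightarrow> nat \<Rightarrow> (nat \<Rightarrow> complex) \<Rightarrow> (nat \<Rightarrow> complex) \<Rightarrow> complex" where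
  "Delta \<tau> n x z = det (mat (n - 2) (n - 2) (\<lambda>(i, j). Apoly \<tau> n (i + 1) (x (j + 1)) z))"

end

theory Submission
  imports Defs
begin

definition es :: "nat set \<Rightarrow> (nat \<Rightarrow> complex) \<Rightarrow> nat \<Rightarrow> complex" where
  "es A z k = (\<Sum>S\<in>{S. S \<subseteq> A \<and> card S = k}. \<Prod>i\<in>S. z i)"

lemma es_0: "finite A \<Longrightarrow> es A z 0 = 1"
proof -
  assume "finite A"
  then have "{S. S \<subseteq> A \<and> card S = 0} = {{}}" by (auto, metis card_0_eq empty_iff finite_subset)
  then show ?thesis by (simp add: es_def)
qed

lemma es_insert:
  assumes fin: "finite A" and a: "a \<notin> A"
  shows "es (insert a A) z (Suc k) = es A z (Suc k) + z a * es A z k"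
proof -
  let ?X = "{S. S \<subseteq> A \<and> card S = Suc k}"
  let ?Y = "{S. S \<subseteq> A \<and> card S = k}"
  have eq: "{S. S \<subseteq> insert a A \<and> card S = Suc k} = ?X \<union> insert a ` ?Y"
  proof (intro Set.set_eqI iffI)
    fix S assume "S \<in> {S. S \<subseteq> insert a A \<and> card S = Suc k}"
    then have S: "S \<subseteq> insert a A" "card S = Suc k" by auto
    have fS: "finite S" using S(1) fin finite_subset by blast
    show "S \<in> ?X \<union> insert a ` ?Y"
    proof (cases "a \<in> S")
      case True
      have "S = insert a (S - {a})" using True by auto
      moreover have "S - {a} \<in> ?Y" using S True fS by auto
      ultimately show ?thesis by blast
    next
      case False
      then show ?thesis using S by auto
    qed
  next
    fix S assume "S \<in> ?X \<union> insert a ` ?Y"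
    then show "S \<in> {S. S \<subseteq> insert a A \<and> card S = Suc k}"
    proof
      assume "S \<in> ?X" then show ?thesis by auto
    next
      assume "S \<in> insert a ` ?Y"
      then obtain T where T: "T \<subseteq> A" "card T = k" "S = insert a T" by auto
      have "finite T" using T(1) fin finite_subset by blast
      moreover have "a \<notin> T" using T(1) a by auto
      ultimately show ?thesis using T by auto
    qed
  qed
  have disj: "?X \<inter> insert a ` ?Y = {}" using a by auto
  have finX: "finite ?X" using fin by auto
  have finY: "finite ?Y" using fin by auto
  have inj: "inj_on (insert a) ?Y"
    unfolding inj_on_def using a by (metis (no_types, lifting) insert_Diff_single insert_absorb mem_Collect_eq subset_iff Diff_insert_absorb)
  have "es (insert a A) z (Suc k) = (\<Sum>S\<in>?X. \<Prod>i\<in>S. z i) + (\<Sum>S\<in>insert a ` ?Y. \<Prod>i\<in>S. z i)"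
    unfolding es_def eq by (rule sum.union_disjoint[OF finX _ disj]) (use finY in auto)
  also have "(\<Sum>S\<in>insert a ` ?Y. \<Prod>i\<in>S. z i) = (\<Sum>S\<in>?Y. \<Prod>i\<in>insert a S. z i)"
    by (rule sum.reindex[OF inj, unfolded comp_def])
  also have "\<dots> = (\<Sum>S\<in>?Y. z a * (\<Prod>i\<in>S. z i))"
  proof (rule sum.cong[OF refl])
    fix S assume "S \<in> ?Y"
    then have "finite S" "a \<notin> S" using fin a finite_subset by auto
    then show "(\<Prod>i\<in>insert a S. z i) = z a * (\<Prod>i\<in>S. z i)" by simp
  qed
  also have "\<dots> = z a * es A z k" unfolding es_def by (simp add: sum_distrib_left)
  finally show ?thesis unfolding es_def by simp
qed

lemma es_cong: "(\<And>i. i \<in> A \<Longrightarrow> z i = z' i) \<Longrightarrow> es A z k = es A z' k"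
  unfolding es_def by (intro sum.cong refl prod.cong) auto

lemma esym_split:
  assumes "n \<ge> 1"
  shows "esym n k (z(1 := w)) = es {2..n} z k + (if k = 0 then 0 else w * es {2..n} z (k - 1))"
proof -
  have A: "{1..n} = insert 1 {2..n}" using assms by auto
  have e: "esym n k (z(1:=w)) = es (insert 1 {2..n}) (z(1:=w)) k" unfolding A[symmetric] by (simp add: esym_def es_def)
  have c: "es {2..n} (z(1:=w)) j = es {2..n} z j" for j by (rule es_cong) auto
  show ?thesis
  proof (cases k)
    case 0 then show ?thesis using e es_0[of "insert 1 {2..n}"] es_0[of "{2..n}"] by simp
  next
    case (Suc j)
    show ?thesis using e es_insert[of "{2..n}" 1 "z(1:=w)" j] c Suc by simp
  qed
qed

definition Qs :: "complex \<Rightarrow> complex \<Rightarrow> nat \<Rightarrow> (nat \<Rightarrow> complex) \<Rightarrow> complex" where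
  "Qs t y k s = (\<Sum>\<kappa>=0..k. (-1) ^ \<kappa> * y ^ (k - \<kappa>) * t ^ \<kappa> * s \<kappa>)"

definition Qm :: "complex \<Rightarrow> complex \<Rightarrow> nat \<Rightarrow> (nat \<Rightarrow> complex) \<Rightarrow> complex" where
  "Qm t y k s = (if k = 0 then 0 else Qs t y (k - 1) s)"

lemma Qm_Suc: "Qm t y (Suc k) s = Qs t y k s" by (simp add: Qm_def)

lemma Qs_rec: "Qs t y k s = y * Qm t y k s + (-1) ^ k * t ^ k * s k"
proof (cases k)
  case 0 then show ?thesis by (simp add: Qs_def Qm_def)
next
  case (Suc j)
  have "Qs t y (Suc j) s = (\<Sum>\<kappa>=0..j. (-1) ^ \<kappa> * y ^ (Suc j - \<kappa>) * t ^ \<kappa> * s \<kappa>) + (-1) ^ Suc j * t ^ Suc j * s (Suc j)"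
    unfolding Qs_def by (simp add: sum.atLeast0_atMost_Suc)
  also have "(\<Sum>\<kappa>=0..j. (-1) ^ \<kappa> * y ^ (Suc j - \<kappa>) * t ^ \<kappa> * s \<kappa>) = y * Qs t y j s"
    unfolding Qs_def sum_distrib_left
    by (rule sum.cong[OF refl]) (simp add: Suc_diff_le)
  finally show ?thesis using Suc by (simp add: Qm_def)
qed

lemma Qs_split: "Qs t y k (\<lambda>\<kappa>. s \<kappa> + (if \<kappa> = 0 then 0 else w * s (\<kappa> - 1))) = Qs t y k s - w * t * Qm t y k s"
proof (cases k)
  case 0 then show ?thesis by (simp add: Qs_def Qm_def)
next
  case (Suc j)
  have "Qs t y k (\<lambda>\<kappa>. s \<kappa> + (if \<kappa> = 0 then 0 else w * s (\<kappa> - 1))) =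
     Qs t y k s + (\<Sum>\<kappa>=0..Suc j. (-1) ^ \<kappa> * y ^ (Suc j - \<kappa>) * t ^ \<kappa> * (if \<kappa> = 0 then 0 else w * s (\<kappa> - 1)))"
    unfolding Qs_def Suc by (simp add: algebra_simps sum.distrib)
  also have "(\<Sum>\<kappa>=0..Suc j. (-1) ^ \<kappa> * y ^ (Suc j - \<kappa>) * t ^ \<kappa> * (if \<kappa> = 0 then 0 else w * s (\<kappa> - 1)))
     = (\<Sum>\<kappa>=0..j. (-1) ^ Suc \<kappa> * y ^ (Suc j - Suc \<kappa>) * t ^ Suc \<kappa> * (w * s \<kappa>))"
    by (subst sum.atLeast0_atMost_Suc_shift) simp
  also have "\<dots> = - (w * t * Qs t y j s)"
    unfolding Qs_def sum_distrib_left sum_negf[symmetric]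
    by (rule sum.cong[OF refl]) (simp add: algebra_simps)
  finally show ?thesis using Suc by (simp add: Qm_def)
qed

lemma powi_pos: "(\<tau>::complex) \<noteq> 0 \<Longrightarrow> \<tau> powi (int n * int m + int k) = (\<tau> ^ n) ^ m * \<tau> ^ k"
proof -
  have e: "int n * int m + int k = int (n * m + k)" by simp
  show ?thesis unfolding e power_int_of_nat by (simp add: power_add power_mult)
qed

lemma powi_neg: "(\<tau>::complex) \<noteq> 0 \<Longrightarrow> \<tau> powi (- (int n * int m) - int k) = (inverse (\<tau> ^ n)) ^ m * (inverse \<tau>) ^ k"
proof -
  assume t: "\<tau> \<noteq> 0"
  have e: "- (int n * int m) - int k = - int (n * m + k)" by simp
  have "\<tau> powi (- (int n * int m) - int k) = inverse (\<tau> ^ (n * m + k))"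
    unfolding e power_int_minus power_int_of_nat ..
  then show ?thesis by (simp add: power_add power_mult power_inverse inverse_mult_distrib)
qed

lemma Apoly_Qs:
  assumes "\<tau> \<noteq> 0"
  shows "Apoly \<tau> n lam x z = Qs \<tau> (x * \<tau> ^ n) lam (\<lambda>\<kappa>. esym n \<kappa> z)
      - Qs (inverse \<tau>) (x * inverse (\<tau> ^ n)) lam (\<lambda>\<kappa>. esym n \<kappa> z)"
  unfolding Apoly_def Qs_def sum_subtractf[symmetric]
  by (rule sum.cong[OF refl]) (simp only: powi_pos[OF assms] powi_neg[OF assms], simp add: power_mult_distrib algebra_simps)

lemma Apoly_split:
  assumes "\<tau> \<noteq> 0" "n \<ge> 1"
  shows "Apoly \<tau> n lam x (z(1 := w)) =
     (Qs \<tau> (x * \<tau> ^ n) lam (es {2..n} z) - w * \<tau> * Qm \<tau> (x * \<tau> ^ n) lam (es {2..n} z))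
   - (Qs (inverse \<tau>) (x * inverse (\<tau> ^ n)) lam (es {2..n} z) - w * inverse \<tau> * Qm (inverse \<tau>) (x * inverse (\<tau> ^ n)) lam (es {2..n} z))"
  unfolding Apoly_Qs[OF assms(1)] esym_split[OF assms(2)] Qs_split ..

lemma entry:
  fixes a x' \<tau> :: complex and z :: "nat \<Rightarrow> complex"
  assumes t: "\<tau> \<noteq> 0" and n: "n \<ge> 1"
  defines "T \<equiv> \<tau> ^ n"
  defines "u \<equiv> inverse \<tau>" and "V \<equiv> inverse T"
  defines "b \<equiv> a * T * u" and "c \<equiv> a * \<tau> * V"
  defines "AL \<equiv> \<lambda>l x'. Apoly \<tau> n l x' (z(1 := a * V))"
  defines "AR \<equiv> \<lambda>l x'. Apoly \<tau> n l x' (z(1 := a * T))"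
  shows "AL (Suc m) (a * u) - b * AL m (a * u) = AR (Suc m) (a * \<tau>) - c * AR m (a * \<tau>)"
    and "(x' - a * \<tau>) * ((AL (Suc m) x' - AL (Suc m) (a * u)) - b * (AL m x' - AL m (a * u)))
       = (x' - a * u) * ((AR (Suc m) x' - AR (Suc m) (a * \<tau>)) - c * (AR m x' - AR m (a * \<tau>)))"
  unfolding AL_def AR_def b_def c_def
  by (simp only: Apoly_split[OF t n] Qs_rec Qm_Suc u_def[symmetric] V_def[symmetric] T_def[symmetric],
      simp add: algebra_simps)+

lemma colop:
  fixes f :: "nat \<Rightarrow> nat \<Rightarrow> complex" and c :: "nat \<Rightarrow> complex"
  shows "det (mat m m (\<lambda>(i,j). if j = 0 then f i 0 else c j * (f i j - f i 0)))
       = (\<Prod>j\<in>{1..<m}. c j) * det (mat m m (\<lambda>(i,j). f i j))"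
proof -
  define E where "E = mat m m (\<lambda>(k,j). (if k = j then (if j = 0 then 1 else c j) else 0) + (if k = 0 \<and> j \<noteq> 0 then - c j else 0))"
  define M where "M = mat m m (\<lambda>(i,j). f i j)"
  have EC: "E \<in> carrier_mat m m" and MC: "M \<in> carrier_mat m m" unfolding E_def M_def by auto
  have prod: "mat m m (\<lambda>(i,j). if j = 0 then f i 0 else c j * (f i j - f i 0)) = M * E"
  proof (rule eq_matI)
    fix i j assume ij: "i < dim_row (M * E)" "j < dim_col (M * E)"
    then have i: "i < m" and j: "j < m" using EC MC by auto
    have "(M * E) $$ (i, j) = (\<Sum>k\<in>{0..<m}. f i k * ((if k = j then (if j = 0 then 1 else c j) else 0) + (if k = 0 \<and> j \<noteq> 0 then - c j else 0)))"
      using i j unfolding M_def E_def by (simp add: scalar_prod_def)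
    also have "\<dots> = (\<Sum>k\<in>{0..<m}. (if k = j then f i k * (if j = 0 then 1 else c j) else 0)) + (\<Sum>k\<in>{0..<m}. (if k = 0 then f i k * (if j \<noteq> 0 then - c j else 0) else 0))"
      by (simp add: distrib_left sum.distrib if_distrib[of "(*) _"] cong: if_cong)
    also have "\<dots> = f i j * (if j = 0 then 1 else c j) + f i 0 * (if j \<noteq> 0 then - c j else 0)"
      using i j by (simp add: sum.delta)
    finally show "mat m m (\<lambda>(i,j). if j = 0 then f i 0 else c j * (f i j - f i 0)) $$ (i, j) = (M * E) $$ (i, j)"
      using i j by (simp add: algebra_simps)
  qed (use EC MC in auto)
  have "upper_triangular E" unfolding E_def by (intro upper_triangularI) auto
  then have "det E = (\<Prod>i = 0..<m. E $$ (i, i))"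
    using det_upper_triangular[OF _ EC] prod_list_diag_prod[of E] EC by auto
  also have "\<dots> = (\<Prod>i = 0..<m. if i = 0 then 1 else c i)"
    unfolding E_def by (intro prod.cong) auto
  also have "\<dots> = (\<Prod>j\<in>{1..<m}. c j)"
  proof (cases m)
    case 0 then show ?thesis by simp
  next
    case (Suc k)
    have "{0..<m} = insert 0 {1..<m}" using Suc by auto
    then show ?thesis by (simp add: prod.insert)
  qed
  finally show ?thesis unfolding prod det_mult[OF MC EC] by (simp add: M_def mult.commute)
qed

lemma rowop:
  fixes P :: "nat \<Rightarrow> nat \<Rightarrow> complex" and b :: complex
  shows "det (mat m m (\<lambda>(i,j). P i j - b * (if i = 0 then 0 else P (i - 1) j)))
       = det (mat m m (\<lambda>(i,j). P i j))"
proof -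
  define S where "S = mat m m (\<lambda>(i,k). (if i = k then 1 else 0) + (if i = Suc k then - b else 0))"
  define M where "M = mat m m (\<lambda>(i,j). P i j)"
  have SC: "S \<in> carrier_mat m m" and MC: "M \<in> carrier_mat m m" unfolding S_def M_def by auto
  have prod: "mat m m (\<lambda>(i,j). P i j - b * (if i = 0 then 0 else P (i - 1) j)) = S * M"
  proof (rule eq_matI)
    fix i j assume ij: "i < dim_row (S * M)" "j < dim_col (S * M)"
    then have i: "i < m" and j: "j < m" using SC MC by auto
    have "(S * M) $$ (i, j) = (\<Sum>k\<in>{0..<m}. ((if i = k then 1 else 0) + (if i = Suc k then - b else 0)) * P k j)"
      using i j unfolding M_def S_def by (simp add: scalar_prod_def)
    also have "\<dots> = (\<Sum>k\<in>{0..<m}. (if k = i then P k j else 0)) + (\<Sum>k\<in>{0..<m}. (if k = i - 1 \<and> i \<noteq> 0 then - b * P k j else 0))"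
      unfolding sum.distrib[symmetric] by (rule sum.cong[OF refl]) auto
    also have "\<dots> = P i j + (if i = 0 then 0 else - b * P (i - 1) j)"
      using i j by (simp add: sum.delta)
    finally show "mat m m (\<lambda>(i,j). P i j - b * (if i = 0 then 0 else P (i - 1) j)) $$ (i, j) = (S * M) $$ (i, j)"
      using i j by simp
  qed (use SC MC in auto)
  have "det S = prod_list (diag_mat S)"
    by (rule det_lower_triangular[OF _ SC]) (auto simp: S_def)
  also have "\<dots> = (\<Prod>i = 0..<m. S $$ (i, i))" using prod_list_diag_prod[of S] SC by auto
  also have "\<dots> = 1" unfolding S_def by (intro prod.neutral) auto
  finally show ?thesis unfolding prod det_mult[OF SC MC] by (simp add: M_def)
qed

lemma Apoly_0: "Apoly \<tau> n 0 x z = 0" by (simp add: Apoly_def)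

theorem lemma4p2:
  fixes \<tau> :: complex and n :: nat and x z :: "nat \<Rightarrow> complex"
  assumes "n \<ge> 3" and "\<tau> \<noteq> 0"
  shows "(\<Prod>\<mu>=2..n-2. (x \<mu> - z 1 * \<tau>)) *
           Delta \<tau> n (x(1 := z 1 * \<tau> powi (-1))) (z(1 := z 1 * \<tau> powi (- int n)))
       = (\<Prod>\<mu>=2..n-2. (x \<mu> - z 1 * \<tau> powi (-1))) *
           Delta \<tau> n (x(1 := z 1 * \<tau>)) (z(1 := z 1 * \<tau> ^ n))"
proof -
  have t: "\<tau> \<noteq> 0" using assms by simp
  have n1: "n \<ge> 1" using assms by simp
  define a where "a = z 1"
  define m where "m = n - 2"
  have pm1: "\<tau> powi (-1) = inverse \<tau>" by (simp add: power_int_minus)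
  have pmn: "\<tau> powi (- int n) = inverse (\<tau> ^ n)" by (simp add: power_int_minus power_int_of_nat)
  define AL where "AL = (\<lambda>l x'. Apoly \<tau> n l x' (z(1 := a * inverse (\<tau> ^ n))))"
  define AR where "AR = (\<lambda>l x'. Apoly \<tau> n l x' (z(1 := a * \<tau> ^ n)))"
  define b where "b = a * \<tau> ^ n * inverse \<tau>"
  define c where "c = a * \<tau> * inverse (\<tau> ^ n)"
  define eL where "eL = (\<lambda>l j. if j = 0 then AL l (a * inverse \<tau>)
        else (x (j + 1) - a * \<tau>) * (AL l (x (j + 1)) - AL l (a * inverse \<tau>)))"
  define eR where "eR = (\<lambda>l j. if j = 0 then AR l (a * \<tau>)
        else (x (j + 1) - a * inverse \<tau>) * (AR l (x (j + 1)) - AR l (a * \<tau>)))"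
  have E0: "AL (Suc i) (a * inverse \<tau>) - b * AL i (a * inverse \<tau>) = AR (Suc i) (a * \<tau>) - c * AR i (a * \<tau>)" for i
    using entry(1)[OF t n1, where a=a and z=z and m=i] unfolding AL_def AR_def b_def c_def .
  have E1: "(x' - a * \<tau>) * ((AL (Suc i) x' - AL (Suc i) (a * inverse \<tau>)) - b * (AL i x' - AL i (a * inverse \<tau>)))
       = (x' - a * inverse \<tau>) * ((AR (Suc i) x' - AR (Suc i) (a * \<tau>)) - c * (AR i x' - AR i (a * \<tau>)))" for i x'
    using entry(2)[OF t n1, where a=a and z=z and m=i and x'=x'] unfolding AL_def AR_def b_def c_def .
  have eL0: "eL 0 j = 0" for j by (simp add: eL_def AL_def Apoly_0)
  have eR0: "eR 0 j = 0" for j by (simp add: eR_def AR_def Apoly_0)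
  have key: "eL (Suc i) j - b * eL i j = eR (Suc i) j - c * eR i j" for i j
  proof (cases "j = 0")
    case True then show ?thesis using E0[of i] by (simp add: eL_def eR_def)
  next
    case False then show ?thesis using E1[of "x (j+1)" i] by (simp add: eL_def eR_def algebra_simps)
  qed
  have pr: "(\<Prod>\<mu>=2..m. g \<mu>) = (\<Prod>j\<in>{1..<m}. g (j + 1))" for g :: "nat \<Rightarrow> complex"
  proof -
    have e: "{2..m} = Suc ` {1..<m}" unfolding image_Suc_atLeastLessThan m_def
      using atLeastLessThanSuc_atLeastAtMost[of 2 "n-2"] by (simp add: numeral_2_eq_2)
    show ?thesis unfolding e by (subst prod.reindex) auto
  qed
  have stepL: "(\<Prod>\<mu>=2..n-2. (x \<mu> - z 1 * \<tau>)) *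
           Delta \<tau> n (x(1 := z 1 * \<tau> powi (-1))) (z(1 := z 1 * \<tau> powi (- int n)))
     = det (mat m m (\<lambda>(i,j). eL (Suc i) j))"
  proof -
    have "det (mat m m (\<lambda>(i,j). eL (Suc i) j)) = det (mat m m (\<lambda>(i,j).
         if j = 0 then AL (i+1) ((x(1 := a * inverse \<tau>)) (0+1)) else (x (j + 1) - a * \<tau>) * (AL (i+1) ((x(1 := a * inverse \<tau>)) (j+1)) - AL (i+1) ((x(1 := a * inverse \<tau>)) (0+1)))))"
      by (rule arg_cong[where f = det], rule arg_cong[where f = "mat m m"]) (auto simp: eL_def fun_eq_iff)
    also have "\<dots> = (\<Prod>j\<in>{1..<m}. x (j + 1) - a * \<tau>) * det (mat m m (\<lambda>(i,j). AL (i+1) ((x(1 := a * inverse \<tau>)) (j+1))))"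
      by (rule colop[where f = "\<lambda>i j. AL (i+1) ((x(1 := a * inverse \<tau>)) (j+1))" and c = "\<lambda>j. x (j + 1) - a * \<tau>"])
    finally show ?thesis unfolding Delta_def pm1 pmn a_def[symmetric] m_def[symmetric] AL_def by (simp add: pr)
  qed
  have stepR: "(\<Prod>\<mu>=2..n-2. (x \<mu> - z 1 * \<tau> powi (-1))) *
           Delta \<tau> n (x(1 := z 1 * \<tau>)) (z(1 := z 1 * \<tau> ^ n))
     = det (mat m m (\<lambda>(i,j). eR (Suc i) j))"
  proof -
    have "det (mat m m (\<lambda>(i,j). eR (Suc i) j)) = det (mat m m (\<lambda>(i,j).
         if j = 0 then AR (i+1) ((x(1 := a * \<tau>)) (0+1)) else (x (j + 1) - a * inverse \<tau>) * (AR (i+1) ((x(1 := a * \<tau>)) (j+1)) - AR (i+1) ((x(1 := a * \<tau>)) (0+1)))))"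
      by (rule arg_cong[where f = det], rule arg_cong[where f = "mat m m"]) (auto simp: eR_def fun_eq_iff)
    also have "\<dots> = (\<Prod>j\<in>{1..<m}. x (j + 1) - a * inverse \<tau>) * det (mat m m (\<lambda>(i,j). AR (i+1) ((x(1 := a * \<tau>)) (j+1))))"
      by (rule colop[where f = "\<lambda>i j. AR (i+1) ((x(1 := a * \<tau>)) (j+1))" and c = "\<lambda>j. x (j + 1) - a * inverse \<tau>"])
    finally show ?thesis unfolding Delta_def pm1 a_def[symmetric] m_def[symmetric] AR_def by (simp add: pr)
  qed
  have "det (mat m m (\<lambda>(i,j). eL (Suc i) j)) = det (mat m m (\<lambda>(i,j). eL (Suc i) j - b * (if i = 0 then 0 else eL (Suc (i - 1)) j)))"
    using rowop[of m "\<lambda>i j. eL (Suc i) j" b] by simp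
  also have "\<dots> = det (mat m m (\<lambda>(i,j). eR (Suc i) j - c * (if i = 0 then 0 else eR (Suc (i - 1)) j)))"
  proof (rule arg_cong[where f = det], rule arg_cong[where f = "mat m m"], rule ext, clarify)
    fix i j
    have "(if i = 0 then 0 else eL (Suc (i - 1)) j) = eL i j" using eL0 by (cases i) auto
    moreover have "(if i = 0 then 0 else eR (Suc (i - 1)) j) = eR i j" using eR0 by (cases i) auto
    ultimately show "eL (Suc i) j - b * (if i = 0 then 0 else eL (Suc (i - 1)) j) = eR (Suc i) j - c * (if i = 0 then 0 else eR (Suc (i - 1)) j)"
      using key[of i j] by simp
  qed
  also have "\<dots> = det (mat m m (\<lambda>(i,j). eR (Suc i) j))"
    using rowop[of m "\<lambda>i j. eR (Suc i) j" c] by simp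
  finally show ?thesis using stepL stepR by simp
qed

end
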